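(* Let $v\in L_2(0,1)$ and $\alpha\in[0,2\pi)$, and let $A(v,0,\alpha)$ be the self-adjoint operator in $L_2(0,1)$ acting by $A(v,0,\alpha)\psi=i\psi'+v(x)\big[\psi(0)-\tfrac{i}{2}\langle\psi,v\rangle\big]$ on the domain of $\psi\in W_2^1(0,1)$ with $\psi(1)=e^{i\alpha}[\psi(0)-i\langle\psi,v\rangle]$. For real $\lambda$ put $$\tilde v=\int_0^1e^{i\lambda y}v(y)\,dy,\qquad \hat v=\int_0^1\!\!\int_0^xe^{-i\lambda(x-y)}v(y)\overline{v(x)}\,dy\,dx,$$ $$\chi(\lambda)=i\big(2i+\overline{\tilde v}\big)\big(e^{-i\lambda}\tilde v+ie^{i\alpha}\hat v\big)+i\big(2-\hat v\big)\big(e^{-i\lambda}-e^{i\alpha}+ie^{i\alpha}\overline{\tilde v}\big).$$ Then the real zeros of $\chi$, and only they, are the eigenvalues of $A(v,0,\alpha)$. For such a zero $\lambda$, every nontrivial solution $(C_1,C_2)$ of the homogeneous system $$C_1\big(e^{-i\lambda}-e^{i\alpha}+ie^{i\alpha}\overline{\tilde v}\big)-iC_2\big(e^{-i\lambda}\tilde v+ie^{i\alpha}\hat v\big)=0,\qquad C_1\big(2i+\overline{\tilde v}\big)+iC_2\big(2-\hat v\big)=0$$ gives an eigenfunction $\psi(x)=C_1e^{-i\lambda x}-iC_2\int_0^xe^{-i\lambda(x-y)}v(y)\,dy$.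
   Context: $\langle f,g\rangle=\int_0^1 f\bar g\,dx$; $W_2^1(0,1)$ is the Sobolev space; $\overline{\tilde v}$ is the complex conjugate of $\tilde v$. *)

theory Defs
  imports "HOL-Analysis.Analysis"
begin

text \<open>Functions on (0,1) are modelled as functions real => complex; only their
values on [0,1] matter.  Integrals over (0,1) are Lebesgue integrals over the
closed interval [0,1] (differs from (0,1) by a null set).\<close>

definition L2_01 :: "(real \<Rightarrow> complex) \<Rightarrow> bool" where
  "L2_01 f \<longleftrightarrow> set_borel_measurable lborel {0..1} f \<and>
     set_integrable lborel {0..1} (\<lambda>x. (cmod (f x))\<^sup>2)"

definition ip01 :: "(real \<Rightarrow> complex) \<Rightarrow> (real \<Rightarrow> complex) \<Rightarrow> complex" where
  "ip01 f g = (LINT x:{0..1}|lborel. f x * cnj (g x))"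

text \<open>Sobolev space W_2^1(0,1): psi is absolutely continuous on [0,1] with
derivative g in L_2(0,1), i.e. psi(x) = psi(0) + integral_0^x g.\<close>
definition W21_deriv :: "(real \<Rightarrow> complex) \<Rightarrow> (real \<Rightarrow> complex) \<Rightarrow> bool" where
  "W21_deriv \<psi> g \<longleftrightarrow> L2_01 g \<and>
     (\<forall>x\<in>{0..1}. \<psi> x = \<psi> 0 + (LINT t:{0..x}|lborel. g t))"

definition W21 :: "(real \<Rightarrow> complex) \<Rightarrow> bool" where
  "W21 \<psi> \<longleftrightarrow> (\<exists>g. W21_deriv \<psi> g)"

definition domA :: "(real \<Rightarrow> complex) \<Rightarrow> real \<Rightarrow> (real \<Rightarrow> complex) \<Rightarrow> bool" where
  "domA v \<alpha> \<psi> \<longleftrightarrow> W21 \<psi> \<and>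
     \<psi> 1 = exp (\<i> * complex_of_real \<alpha>) * (\<psi> 0 - \<i> * ip01 \<psi> v)"

definition eigenfunA :: "(real \<Rightarrow> complex) \<Rightarrow> real \<Rightarrow> real \<Rightarrow> (real \<Rightarrow> complex) \<Rightarrow> bool" where
  "eigenfunA v \<alpha> lam \<psi> \<longleftrightarrow> domA v \<alpha> \<psi> \<and>
     \<not> (AE x in lborel. x \<in> {0..1} \<longrightarrow> \<psi> x = 0) \<and>
     (\<exists>g. W21_deriv \<psi> g \<and>
        (AE x in lborel. x \<in> {0..1} \<longrightarrow>
           \<i> * g x + v x * (\<psi> 0 - (\<i> / 2) * ip01 \<psi> v) = complex_of_real lam * \<psi> x))"

definition eigenvalueA :: "(real \<Rightarrow> complex) \<Rightarrow> real \<Rightarrow> real \<Rightarrow> bool" where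
  "eigenvalueA v \<alpha> lam \<longleftrightarrow> (\<exists>\<psi>. eigenfunA v \<alpha> lam \<psi>)"

definition vtilde :: "(real \<Rightarrow> complex) \<Rightarrow> real \<Rightarrow> complex" where
  "vtilde v lam = (LINT y:{0..1}|lborel. exp (\<i> * complex_of_real (lam * y)) * v y)"

definition vhat :: "(real \<Rightarrow> complex) \<Rightarrow> real \<Rightarrow> complex" where
  "vhat v lam = (LINT x:{0..1}|lborel.
      (LINT y:{0..x}|lborel. exp (- \<i> * complex_of_real (lam * (x - y))) * v y) * cnj (v x))"

definition chi :: "(real \<Rightarrow> complex) \<Rightarrow> real \<Rightarrow> real \<Rightarrow> complex" where
  "chi v \<alpha> lam =
     \<i> * (2 * \<i> + cnj (vtilde v lam)) *
       (exp (- \<i> * complex_of_real lam) * vtilde v lam + \<i> * exp (\<i> * complex_of_real \<alpha>) * vhat v lam)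
   + \<i> * (2 - vhat v lam) *
       (exp (- \<i> * complex_of_real lam) - exp (\<i> * complex_of_real \<alpha>)
        + \<i> * exp (\<i> * complex_of_real \<alpha>) * cnj (vtilde v lam))"

end

theory Submission
  imports Defs
begin

definition EE :: "real \<Rightarrow> real \<Rightarrow> complex" where
  "EE lam t = exp (- \<i> * complex_of_real (lam * t))"

lemma EE_cont[continuous_intros]: "continuous_on S (\<lambda>t. EE lam (f t))" if "continuous_on S f"
  unfolding EE_def by (intro continuous_intros that)

lemma EE_meas[measurable]: "(\<lambda>t. EE lam t) \<in> borel_measurable borel"
  unfolding EE_def by measurable

lemma EE_norm[simp]: "norm (EE lam t) = 1"
  unfolding EE_def by (simp del: norm_exp_eq_Re add: norm_exp_eq_Re)

lemma integrable_ind_Icc[simp]: "integrable lborel (indicat_real {a..b::real})"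
  using borel_integrable_atLeastAtMost'[of a b "\<lambda>_. 1::real"] by (simp add: set_integrable_def)

lemma fubini_K:
  fixes u :: "real \<Rightarrow> complex"
  assumes um[measurable]: "u \<in> borel_measurable borel" and ui: "integrable lborel u"
  shows "(LINT t:{0..x}|lborel. (LINT y:{0..t}|lborel. EE lam (t-y) * u y))
       = (LINT y:{0..x}|lborel. u y * (LINT t:{y..x}|lborel. EE lam (t-y)))"
proof -
  define F where "F t y = (if 0 \<le> y \<and> y \<le> t \<and> t \<le> x then EE lam (t - y) * u y else 0)" for t y
  have Fm: "(\<lambda>p. F (fst p) (snd p)) \<in> borel_measurable (lborel \<Otimes>\<^sub>M lborel)"
    unfolding F_def by measurable
  have Gi: "integrable (lborel \<Otimes>\<^sub>M lborel) (\<lambda>p::real\<times>real. indicator {0..x} (fst p) * norm (u (snd p)))"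
  proof (rule lborel_pair.Fubini_integrable)
    show "(\<lambda>p::real\<times>real. indicator {0..x} (fst p) * norm (u (snd p))) \<in> borel_measurable (lborel \<Otimes>\<^sub>M lborel)"
      by measurable
    have "(\<lambda>t. \<integral>y. norm (indicator {0..x} (fst (t, y)) * norm (u (snd (t, y))) :: real) \<partial>lborel)
        = (\<lambda>t. indicator {0..x} t * (\<integral>y. norm (u y) \<partial>lborel))"
      by (auto simp: indicator_def)
    moreover have "integrable lborel (\<lambda>t. indicator {0..x} t * (\<integral>y. norm (u y) \<partial>lborel))"
      by (intro integrable_mult_left) auto
    ultimately show "integrable lborel (\<lambda>t. \<integral>y. norm (indicator {0..x} (fst (t, y)) * norm (u (snd (t, y))) :: real) \<partial>lborel)"
      by simp
    show "AE t in lborel. integrable lborel (\<lambda>y. indicator {0..x} (fst (t, y)) * norm (u (snd (t, y))) :: real)"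
      using ui by (auto intro!: integrable_mult_right)
  qed
  have Fi: "integrable (lborel \<Otimes>\<^sub>M lborel) (case_prod F)"
  proof (rule Bochner_Integration.integrable_bound[OF Gi])
    show "case_prod F \<in> borel_measurable (lborel \<Otimes>\<^sub>M lborel)"
      using Fm by (simp add: case_prod_beta')
    show "AE p in lborel \<Otimes>\<^sub>M lborel. norm (case_prod F p) \<le> norm (indicator {0..x} (fst p) * norm (u (snd p)) :: real)"
      by (intro AE_I2) (auto simp: F_def indicator_def norm_mult split: prod.splits)
  qed
  have L1: "indicator {0..x} t *\<^sub>R (\<integral>y. indicator {0..t} y *\<^sub>R (EE lam (t-y) * u y) \<partial>lborel) = (\<integral>y. F t y \<partial>lborel)" for t
    apply (subst integral_scaleR_right[symmetric])
    apply (rule Bochner_Integration.integral_cong)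
    by (auto simp: F_def indicator_def)
  have L: "(LINT t:{0..x}|lborel. (LINT y:{0..t}|lborel. EE lam (t-y) * u y)) = (\<integral>t. (\<integral>y. F t y \<partial>lborel) \<partial>lborel)"
    unfolding set_lebesgue_integral_def L1 ..
  have R1: "indicator {0..x} y *\<^sub>R (u y * (\<integral>t. indicator {y..x} t *\<^sub>R EE lam (t-y) \<partial>lborel)) = (\<integral>t. F t y \<partial>lborel)" for y
    apply (subst integral_mult_right_zero[symmetric])
    apply (subst integral_scaleR_right[symmetric])
    apply (rule Bochner_Integration.integral_cong)
    by (auto simp: F_def indicator_def)
  have R: "(LINT y:{0..x}|lborel. u y * (LINT t:{y..x}|lborel. EE lam (t-y))) = (\<integral>y. (\<integral>t. F t y \<partial>lborel) \<partial>lborel)"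
    unfolding set_lebesgue_integral_def R1 ..
  show ?thesis unfolding L R using lborel_pair.Fubini_integral[OF Fi] by simp
qed

lemma L2_meas: "L2_01 f \<Longrightarrow> set_borel_measurable borel {0..1} f"
  by (simp add: L2_01_def set_borel_measurable_def)

lemma sq_bound: "(a::real) \<le> 1 + a\<^sup>2"
proof -
  have "0 \<le> (a - 1/2)\<^sup>2" by simp
  also have "\<dots> = a\<^sup>2 - a + 1/4" by (simp add: power2_eq_square algebra_simps)
  finally show ?thesis by simp
qed

lemma L2_integrable: "L2_01 f \<Longrightarrow> set_integrable lborel {0..1} f"
proof -
  assume f: "L2_01 f"
  have i1: "set_integrable lborel {0..1::real} (\<lambda>x. 1::real)"
    by (intro borel_integrable_atLeastAtMost' continuous_intros)
  have i2: "set_integrable lborel {0..1::real} (\<lambda>x. (cmod (f x))\<^sup>2)"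
    using f by (simp add: L2_01_def)
  have "set_integrable lborel {0..1::real} (\<lambda>x. 1 + (cmod (f x))\<^sup>2)"
    using set_integral_add(1)[OF i1 i2] by simp
  then show ?thesis
  proof (rule set_integrable_bound)
    show "set_borel_measurable lborel {0..1} f" using f by (simp add: L2_01_def)
    show "AE x in lborel. x \<in> {0..1} \<longrightarrow> norm (f x) \<le> norm (1 + (cmod (f x))\<^sup>2)"
      using sq_bound[of "cmod (f _)"] by (intro AE_I2) auto
  qed
qed

lemma L2_mult_bdd:
  assumes f: "L2_01 f" and S: "S \<subseteq> {0..1}" "S \<in> sets borel"
    and h: "set_borel_measurable borel S h" and B: "\<And>x. x \<in> S \<Longrightarrow> norm (h x) \<le> B"
  shows "set_integrable lborel S (\<lambda>x. h x * f x)"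
proof -
  have fi: "set_integrable lborel S f"
    by (rule set_integrable_subset[OF L2_integrable[OF f]]) (use S in auto)
  have "set_integrable lborel S (\<lambda>x. of_real (max B 0) * f x)"
    using fi by simp
  then show ?thesis
  proof (rule set_integrable_bound)
    have eq: "(\<lambda>x. indicator S x *\<^sub>R (h x * f x)) = (\<lambda>x. (indicator S x *\<^sub>R h x) * (indicator {0..1} x *\<^sub>R f x))"
      using S by (auto simp: indicator_def fun_eq_iff)
    have m1: "(\<lambda>x. indicator S x *\<^sub>R h x) \<in> borel_measurable borel"
      using h by (simp add: set_borel_measurable_def)
    have m2: "(\<lambda>x. indicator {0..1} x *\<^sub>R f x) \<in> borel_measurable borel"
      using L2_meas[OF f] by (simp add: set_borel_measurable_def)
    show "set_borel_measurable lborel S (\<lambda>x. h x * f x)"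
      unfolding set_borel_measurable_def measurable_lborel2 eq by (rule borel_measurable_times[OF m1 m2])
    show "AE x in lborel. x \<in> S \<longrightarrow> norm (h x * f x) \<le> norm (of_real (max B 0) * f x)"
    proof (intro AE_I2 impI)
      fix x assume "x \<in> S"
      then have "norm (h x) \<le> max B 0" using B[of x] by simp
      then show "norm (h x * f x) \<le> norm (of_real (max B 0) * f x)"
        by (simp add: norm_mult mult_right_mono)
    qed
  qed
qed

lemma L2_cnj: "L2_01 f \<Longrightarrow> L2_01 (\<lambda>x. cnj (f x))"
proof -
  assume f: "L2_01 f"
  have "(\<lambda>x. indicator {0..1} x *\<^sub>R cnj (f x)) = (\<lambda>x. cnj (indicator {0..1} x *\<^sub>R f x))"
    by (simp add: fun_eq_iff)
  moreover have "(\<lambda>x. cnj (indicator {0..1} x *\<^sub>R f x)) \<in> borel_measurable borel"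
    by (rule borel_measurable_continuous_on[OF continuous_on_cnj[OF continuous_on_id]])
       (use L2_meas[OF f] in \<open>simp add: set_borel_measurable_def\<close>)
  ultimately show ?thesis using f unfolding L2_01_def set_borel_measurable_def by simp
qed

lemma L2_cmult: "L2_01 f \<Longrightarrow> L2_01 (\<lambda>x. c * f x)"
proof -
  assume f: "L2_01 f"
  have "set_integrable lborel {0..1} (\<lambda>x. (cmod c)\<^sup>2 * (cmod (f x))\<^sup>2)"
    using f by (simp add: L2_01_def)
  moreover have "set_borel_measurable lborel {0..1} (\<lambda>x. c * f x)"
  proof -
    have "(\<lambda>x. indicator {0..1} x *\<^sub>R (c * f x)) = (\<lambda>x. c * (indicator {0..1} x *\<^sub>R f x))"
      by (simp add: fun_eq_iff)
    moreover have "(\<lambda>x. c * (indicator {0..1} x *\<^sub>R f x)) \<in> borel_measurable borel"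
      by (rule borel_measurable_times[OF borel_measurable_const])
         (use L2_meas[OF f] in \<open>simp add: set_borel_measurable_def\<close>)
    ultimately show ?thesis unfolding set_borel_measurable_def by simp
  qed
  ultimately show ?thesis
    by (simp add: L2_01_def norm_mult power_mult_distrib)
qed

lemma L2_add: assumes f: "L2_01 f" and g: "L2_01 g" shows "L2_01 (\<lambda>x. f x + g x)"
proof -
  have i: "set_integrable lborel {0..1} (\<lambda>x. 2 * (cmod (f x))\<^sup>2 + 2 * (cmod (g x))\<^sup>2)"
    using f g by (simp add: L2_01_def)
  have m: "set_borel_measurable lborel {0..1} (\<lambda>x. f x + g x)"
  proof -
    have "(\<lambda>x. indicator {0..1} x *\<^sub>R (f x + g x)) = (\<lambda>x. indicator {0..1} x *\<^sub>R f x + indicator {0..1} x *\<^sub>R g x)"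
      by (simp add: fun_eq_iff scaleR_add_right)
    moreover have "(\<lambda>x. indicator {0..1} x *\<^sub>R f x + indicator {0..1} x *\<^sub>R g x) \<in> borel_measurable borel"
      by (rule borel_measurable_add) (use L2_meas[OF f] L2_meas[OF g] in \<open>simp_all add: set_borel_measurable_def\<close>)
    ultimately show ?thesis unfolding set_borel_measurable_def by simp
  qed
  have m2: "set_borel_measurable lborel {0..1} (\<lambda>x. (cmod (f x + g x))\<^sup>2)"
  proof -
    have "(\<lambda>x. indicator {0..1} x *\<^sub>R (cmod (f x + g x))\<^sup>2) = (\<lambda>x. (cmod (indicator {0..1} x *\<^sub>R (f x + g x)))\<^sup>2)"
      by (simp add: fun_eq_iff indicator_def)
    moreover have "(\<lambda>x. (cmod (indicator {0..1} x *\<^sub>R (f x + g x)))\<^sup>2) \<in> borel_measurable borel"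
      using m unfolding set_borel_measurable_def by measurable
    ultimately show ?thesis unfolding set_borel_measurable_def by simp
  qed
  have bnd: "AE x in lborel. x \<in> {0..1} \<longrightarrow> norm ((cmod (f x + g x))\<^sup>2) \<le> norm (2 * (cmod (f x))\<^sup>2 + 2 * (cmod (g x))\<^sup>2)"
    proof (intro AE_I2 impI)
      fix x
      have t: "cmod (f x + g x) \<le> cmod (f x) + cmod (g x)" by (rule norm_triangle_ineq)
      have "(cmod (f x + g x))\<^sup>2 \<le> (cmod (f x) + cmod (g x))\<^sup>2"
        by (rule power_mono[OF t]) simp
      also have "\<dots> \<le> 2 * (cmod (f x))\<^sup>2 + 2 * (cmod (g x))\<^sup>2"
        using zero_le_power2[of "cmod (f x) - cmod (g x)"] by (simp add: power2_eq_square algebra_simps)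
      finally show "norm ((cmod (f x + g x))\<^sup>2) \<le> norm (2 * (cmod (f x))\<^sup>2 + 2 * (cmod (g x))\<^sup>2)"
        by simp
    qed
  have "set_integrable lborel {0..1} (\<lambda>x. (cmod (f x + g x))\<^sup>2)"
    by (rule set_integrable_bound[OF i m2 bnd])
  with m show ?thesis by (simp add: L2_01_def)
qed

lemma L2_cont: "continuous_on {0..1} f \<Longrightarrow> L2_01 f"
  unfolding L2_01_def set_borel_measurable_def
  by (auto intro!: borel_measurable_continuous_on_indicator borel_integrable_atLeastAtMost' continuous_intros)

lemma lint_integral: "set_integrable lborel S f \<Longrightarrow> (LINT x:S|lborel. f x) = integral S (f :: real \<Rightarrow> complex)"
  by (rule set_borel_integral_eq_integral(2))

lemma indef_cont:
  fixes f :: "real \<Rightarrow> complex"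
  assumes "set_integrable lborel {a..b} f"
  shows "continuous_on {a..b} (\<lambda>x. LINT t:{a..x}|lborel. f t)"
proof -
  have "continuous_on {a..b} (\<lambda>x. integral {a..x} f)"
    by (rule indefinite_integral_continuous_1[OF set_borel_integral_eq_integral(1)[OF assms]])
  moreover have "(LINT t:{a..x}|lborel. f t) = integral {a..x} f" if "x \<in> {a..b}" for x
    by (rule lint_integral, rule set_integrable_subset[OF assms]) (use that in auto)
  ultimately show ?thesis by (metis (no_types, lifting) continuous_on_cong)
qed

lemma set_integral_cong_AE':
  fixes f g :: "real \<Rightarrow> complex"
  assumes "set_borel_measurable lborel A f" "set_borel_measurable lborel A g"
    and "AE x in lborel. x \<in> A \<longrightarrow> f x = g x"
  shows "(LINT x:A|lborel. f x) = (LINT x:A|lborel. g x)"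
  unfolding set_lebesgue_integral_def
proof (rule integral_cong_AE)
  show "(\<lambda>x. indicator A x *\<^sub>R f x) \<in> borel_measurable lborel"
    "(\<lambda>x. indicator A x *\<^sub>R g x) \<in> borel_measurable lborel"
    using assms(1,2) by (simp_all add: set_borel_measurable_def)
  show "AE x in lborel. indicator A x *\<^sub>R f x = indicator A x *\<^sub>R g x"
    using assms(3) by eventually_elim (auto simp: indicator_def)
qed

lemma EE_deriv: "((\<lambda>t. EE lam (t - y)) has_vector_derivative (- \<i> * of_real lam * EE lam (t - y))) (at t within S)"
proof -
  have "((\<lambda>z. exp (- \<i> * (of_real lam * (z - of_real y)))) has_field_derivative
       (exp (- \<i> * (of_real lam * (of_real t - of_real y))) * (- \<i> * of_real lam))) (at (of_real t))"
    by (auto intro!: derivative_eq_intros)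
  from has_vector_derivative_real_field[OF this] show ?thesis
    by (simp add: EE_def algebra_simps)
qed

lemma exp_deriv: "((\<lambda>u. exp (- (complex_of_real u * c))) has_vector_derivative (- c * exp (- (complex_of_real t * c)))) (at t within S)"
proof -
  have "((\<lambda>z. exp (- (z * c))) has_field_derivative (exp (- (of_real t * c)) * (- c))) (at (of_real t))"
    by (auto intro!: derivative_eq_intros)
  from has_vector_derivative_real_field[OF this] show ?thesis
    by (simp add: algebra_simps)
qed

lemma ode_uniq:
  fixes d :: "real \<Rightarrow> complex"
  assumes cont: "continuous_on {0..1} d" and eq: "\<And>x. x \<in> {0..1} \<Longrightarrow> d x = c * integral {0..x} d"
    and x: "x \<in> {0..1}"
  shows "d x = 0"
proof -
  have D: "(d has_vector_derivative c * d y) (at y within {0..1})" if y: "y \<in> {0..1}" for y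
  proof (rule has_vector_derivative_transform[OF y eq])
    show "((\<lambda>u. c * integral {0..u} d) has_vector_derivative c * d y) (at y within {0..1})"
      by (intro has_vector_derivative_mult_right integral_has_vector_derivative cont y)
  qed
  define h where "h u = exp (- (complex_of_real u * c)) * d u" for u
  have H: "(h has_vector_derivative 0) (at y within {0..1})" if y: "y \<in> {0..1}" for y
  proof -
    have "(h has_vector_derivative (exp (- (complex_of_real y * c)) * (c * d y) + (- c * exp (- (complex_of_real y * c))) * d y)) (at y within {0..1})"
      unfolding h_def by (intro has_vector_derivative_mult exp_deriv D y)
    then show ?thesis by (simp add: algebra_simps)
  qed
  obtain k where k: "\<And>y. y \<in> {0..1} \<Longrightarrow> h y = k"
    using has_vector_derivative_zero_constant[of "{0..1}" h] H by auto
  have "h 0 = 0" using eq[of 0] by (simp add: h_def)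
  then have "h x = 0" using k[of 0] k[OF x] by simp
  then show ?thesis by (simp add: h_def)
qed

lemma cont_ae_zero:
  fixes f :: "real \<Rightarrow> complex"
  assumes cont: "continuous_on {0..1} f" and ae: "AE x in lborel. x \<in> {0..1} \<longrightarrow> f x = 0"
    and x: "x \<in> {0..1}"
  shows "f x = 0"
proof -
  have I: "integral {0..y} f = 0" if y: "y \<in> {0..1}" for y
  proof -
    have c: "continuous_on {0..y} f" by (rule continuous_on_subset[OF cont]) (use y in auto)
    have "integral {0..y} f = (LINT t:{0..y}|lborel. f t)"
      by (rule lint_integral[symmetric], rule borel_integrable_atLeastAtMost'[OF c])
    also have "\<dots> = (LINT t:{0..y}|lborel. 0)"
    proof (rule set_integral_cong_AE')
      show "set_borel_measurable lborel {0..y} f"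
        unfolding set_borel_measurable_def using borel_measurable_continuous_on_indicator[OF _ c] by simp
      show "set_borel_measurable lborel {0..y} (\<lambda>x. 0::complex)" by (simp add: set_borel_measurable_def)
      show "AE x in lborel. x \<in> {0..y} \<longrightarrow> f x = 0"
        using ae by eventually_elim (use y in auto)
    qed
    finally show ?thesis by simp
  qed
  have d1: "((\<lambda>u. integral {0..u} f) has_vector_derivative f x) (at x within {0..1})"
    by (rule integral_has_vector_derivative[OF cont x])
  have d2: "((\<lambda>u. integral {0..u} f) has_vector_derivative 0) (at x within {0..1})"
    by (rule has_vector_derivative_transform[OF x I]) (auto intro: derivative_eq_intros)
  show ?thesis
    using vector_derivative_unique_within_closed_interval[of 0 1 x, OF _ _ d1[unfolded cbox_interval[symmetric]] d2[unfolded cbox_interval[symmetric]]] x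
    by simp
qed

lemma det_zero:
  fixes a b d e C1 C2 :: complex
  assumes e1: "C1 * a - \<i> * C2 * b = 0" and e2: "C1 * d + \<i> * C2 * e = 0" and nz: "(C1, C2) \<noteq> (0, 0)"
  shows "\<i> * d * b + \<i> * e * a = 0"
proof -
  have ii: "\<i> * \<i> = -1" by simp
  have "(\<i> * d * b + \<i> * e * a) * C1 = 0" using e1 e2 ii by algebra
  moreover have "(\<i> * d * b + \<i> * e * a) * C2 = 0" using e1 e2 ii by algebra
  ultimately show ?thesis using nz by auto
qed

lemma det_sol:
  fixes a b d e :: complex
  assumes "\<i> * d * b + \<i> * e * a = 0"
  shows "\<exists>C1 C2. (C1, C2) \<noteq> (0, 0) \<and> C1 * a - \<i> * C2 * b = 0 \<and> C1 * d + \<i> * C2 * e = 0"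
proof (cases "a = 0 \<and> b = 0")
  case False
  then show ?thesis using assms
    by (intro exI[of _ "\<i> * b"] exI[of _ a]) (auto simp: algebra_simps)
next
  case ab: True
  show ?thesis
  proof (cases "d = 0 \<and> e = 0")
    case False
    then show ?thesis using ab
      by (intro exI[of _ "\<i> * e"] exI[of _ "- d"]) (auto simp: algebra_simps)
  next
    case True
    then show ?thesis using ab by (intro exI[of _ 1] exI[of _ 0]) auto
  qed
qed

definition KK :: "(real \<Rightarrow> complex) \<Rightarrow> real \<Rightarrow> real \<Rightarrow> complex" where
  "KK v lam x = (LINT y:{0..x}|lborel. EE lam (x - y) * v y)"

definition WW :: "(real \<Rightarrow> complex) \<Rightarrow> real \<Rightarrow> real \<Rightarrow> complex" where
  "WW v lam x = (LINT y:{0..x}|lborel. EE lam (- y) * v y)"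

lemma EE_diff: "EE lam (x - y) = EE lam x * EE lam (- y)"
  unfolding EE_def by (simp add: algebra_simps flip: exp_add)

lemma EE_0[simp]: "EE lam 0 = 1" by (simp add: EE_def)

lemma EE_cnj: "cnj (exp (\<i> * complex_of_real (lam * y))) = EE lam y"
  by (simp add: EE_def exp_cnj)

lemma EE_neg: "EE lam (- y) = exp (\<i> * complex_of_real (lam * y))"
  by (simp add: EE_def)

definition PHI :: "(real \<Rightarrow> complex) \<Rightarrow> real \<Rightarrow> complex \<Rightarrow> complex \<Rightarrow> real \<Rightarrow> complex" where
  "PHI v lam C1 C2 x = C1 * EE lam x - \<i> * C2 * KK v lam x"

context
  fixes v :: "real \<Rightarrow> complex" and lam :: real
  assumes hv: "L2_01 v"
begin

lemma seti_h:
  assumes S: "S \<subseteq> {0..1}" "S \<in> sets borel" and h[measurable]: "h \<in> borel_measurable borel"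
    and B: "\<And>x. x \<in> S \<Longrightarrow> norm (h x) \<le> B"
  shows "set_integrable lborel S (\<lambda>y. h y * v y)"
  by (rule L2_mult_bdd[OF hv S _ B]) (use S in \<open>simp add: set_borel_measurable_def\<close>)

lemma seti_v:
  assumes S: "S \<subseteq> {0..1}" "S \<in> sets borel"
  shows "set_integrable lborel S v"
  using seti_h[OF S, of "\<lambda>_. 1" 1] by simp

lemma seti_EE:
  assumes S: "S \<subseteq> {0..1}" "S \<in> sets borel"
  shows "set_integrable lborel S (\<lambda>y. EE lam (c - y) * v y)"
  by (rule seti_h[OF S, of _ 1]) auto

lemma KW: "KK v lam x = EE lam x * WW v lam x"
  unfolding KK_def WW_def EE_diff by (simp add: mult.assoc)

lemma W_cont: "continuous_on {0..1} (WW v lam)"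
  unfolding WW_def
  by (rule indef_cont, rule seti_h[of _ _ 1]) auto

lemma K_cont: "continuous_on {0..1} (KK v lam)"
  unfolding KW by (intro continuous_intros W_cont continuous_on_id)

lemma K_0[simp]: "KK v lam 0 = 0"
proof -
  have "KK v lam 0 = integral {0..0} (\<lambda>y. EE lam (0 - y) * v y)"
    unfolding KK_def by (rule lint_integral, rule seti_EE) auto
  then show ?thesis by simp
qed

lemma K_bdd: "\<exists>B. \<forall>x\<in>{0..1}. norm (KK v lam x) \<le> B"
proof -
  have "bounded (KK v lam ` {0..1})"
    by (intro compact_imp_bounded compact_continuous_image K_cont compact_Icc)
  then show ?thesis by (auto simp: bounded_iff)
qed

lemma K_int: "x \<le> 1 \<Longrightarrow> set_integrable lborel {0..x} (KK v lam)"
  by (rule borel_integrable_atLeastAtMost', rule continuous_on_subset[OF K_cont]) auto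

lemma K_meas: "set_borel_measurable borel {0..1} (KK v lam)"
  unfolding set_borel_measurable_def
  by (intro borel_measurable_continuous_on_indicator K_cont) auto

lemma EE_int_FTC:
  assumes "y \<le> x"
  shows "- \<i> * of_real lam * (LINT t:{y..x}|lborel. EE lam (t - y)) = EE lam (x - y) - 1"
proof -
  have m: "(LINT t:{y..x}|lborel. - \<i> * of_real lam * EE lam (t - y)) = - \<i> * of_real lam * (LINT t:{y..x}|lborel. EE lam (t - y))"
    by (rule set_integral_mult_right)
  have "(LINT t:{y..x}|lborel. - \<i> * of_real lam * EE lam (t - y)) = EE lam (x - y) - EE lam (y - y)"
    unfolding set_lebesgue_integral_def
    by (rule integral_FTC_atLeastAtMost[OF assms EE_deriv]) (intro continuous_intros continuous_on_id)
  then show ?thesis unfolding m by simp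
qed

lemma K_ident:
  assumes x: "x \<in> {0..1}"
  shows "KK v lam x = (LINT t:{0..x}|lborel. - \<i> * of_real lam * KK v lam t + v t)"
proof -
  define v0 where "v0 y = indicator {0..1} y *\<^sub>R v y" for y
  have v0m: "v0 \<in> borel_measurable borel"
    using L2_meas[OF hv] unfolding v0_def set_borel_measurable_def by simp
  have v0i: "integrable lborel v0"
    using L2_integrable[OF hv] unfolding v0_def set_integrable_def by simp
  have v0v: "v0 y = v y" if "y \<in> {0..1}" for y using that by (simp add: v0_def)
  have "(LINT t:{0..x}|lborel. KK v lam t) = (LINT t:{0..x}|lborel. (LINT y:{0..t}|lborel. EE lam (t-y) * v0 y))"
    unfolding KK_def
    by (rule set_lebesgue_integral_cong) (use x in \<open>auto intro!: set_lebesgue_integral_cong simp: v0v\<close>)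
  also have "\<dots> = (LINT y:{0..x}|lborel. v0 y * (LINT t:{y..x}|lborel. EE lam (t-y)))"
    by (rule fubini_K[OF v0m v0i])
  finally have F: "(LINT t:{0..x}|lborel. KK v lam t) = (LINT y:{0..x}|lborel. v0 y * (LINT t:{y..x}|lborel. EE lam (t-y)))" .
  have "- \<i> * of_real lam * (LINT t:{0..x}|lborel. KK v lam t)
      = (LINT y:{0..x}|lborel. v0 y * (- \<i> * of_real lam * (LINT t:{y..x}|lborel. EE lam (t-y))))"
    unfolding F by (simp flip: set_integral_mult_right add: algebra_simps)
  also have "\<dots> = (LINT y:{0..x}|lborel. EE lam (x - y) * v y - v y)"
  proof (rule set_lebesgue_integral_cong)
    show "\<forall>y. y \<in> {0..x} \<longrightarrow> v0 y * (- \<i> * of_real lam * (LINT t:{y..x}|lborel. EE lam (t-y))) = EE lam (x - y) * v y - v y"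
    proof (intro allI impI)
      fix y assume y: "y \<in> {0..x}"
      have "- \<i> * of_real lam * (LINT t:{y..x}|lborel. EE lam (t-y)) = EE lam (x - y) - 1"
        using EE_int_FTC[of y x] y by simp
      moreover have "v0 y = v y" using y x by (intro v0v) auto
      ultimately show "v0 y * (- \<i> * of_real lam * (LINT t:{y..x}|lborel. EE lam (t-y))) = EE lam (x - y) * v y - v y"
        by (simp only:) (simp add: algebra_simps)
    qed
  qed simp
  also have "\<dots> = KK v lam x - (LINT y:{0..x}|lborel. v y)"
    unfolding KK_def
    by (rule set_integral_diff(2)) (use x in \<open>auto intro!: seti_EE seti_v\<close>)
  finally have A: "- \<i> * of_real lam * (LINT t:{0..x}|lborel. KK v lam t) = KK v lam x - (LINT y:{0..x}|lborel. v y)" .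
  have "(LINT t:{0..x}|lborel. - \<i> * of_real lam * KK v lam t + v t)
      = (LINT t:{0..x}|lborel. - \<i> * of_real lam * KK v lam t) + (LINT t:{0..x}|lborel. v t)"
    by (rule set_integral_add(2)[OF set_integrable_mult_right[OF K_int] seti_v]) (use x in auto)
  also have "\<dots> = KK v lam x"
    by (subst set_integral_mult_right) (use A in simp)
  finally show ?thesis by simp
qed

lemma W_1: "WW v lam 1 = vtilde v lam"
  unfolding WW_def vtilde_def by (simp add: EE_neg)

lemma cnj_set_integral: "cnj (LINT x:A|M. f x) = (LINT x:A|M. cnj (f x))"
  unfolding set_lebesgue_integral_def
  by (subst Bochner_Integration.integral_cnj[symmetric]) (rule Bochner_Integration.integral_cong; simp)


lemma phi_cont: "continuous_on {0..1} (PHI v lam C1 C2)"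
  unfolding PHI_def by (intro continuous_intros K_cont continuous_on_id)

lemma phi_0: "PHI v lam C1 C2 0 = C1"
  by (simp add: PHI_def)

lemma phi_int: "x \<le> 1 \<Longrightarrow> set_integrable lborel {0..x} (PHI v lam C1 C2)"
  by (rule borel_integrable_atLeastAtMost', rule continuous_on_subset[OF phi_cont]) auto

lemma phi_ident:
  assumes x: "x \<in> {0..1}"
  shows "PHI v lam C1 C2 x = PHI v lam C1 C2 0 + (LINT t:{0..x}|lborel. - \<i> * of_real lam * PHI v lam C1 C2 t - \<i> * C2 * v t)"
proof -
  have i1: "set_integrable lborel {0..x} (\<lambda>t. - \<i> * of_real lam * EE lam t)"
    by (rule borel_integrable_atLeastAtMost') (intro continuous_intros continuous_on_id)
  have i2: "set_integrable lborel {0..x} (\<lambda>t. - \<i> * of_real lam * KK v lam t + v t)"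
    by (rule set_integral_add(1)[OF set_integrable_mult_right[OF K_int] seti_v]) (use x in auto)
  have "(LINT t:{0..x}|lborel. - \<i> * of_real lam * PHI v lam C1 C2 t - \<i> * C2 * v t)
      = (LINT t:{0..x}|lborel. C1 * (- \<i> * of_real lam * EE lam t) + (- \<i> * C2) * (- \<i> * of_real lam * KK v lam t + v t))"
    by (rule set_lebesgue_integral_cong) (auto simp: PHI_def algebra_simps)
  also have "\<dots> = C1 * (LINT t:{0..x}|lborel. - \<i> * of_real lam * EE lam t) + (- \<i> * C2) * (LINT t:{0..x}|lborel. - \<i> * of_real lam * KK v lam t + v t)"
    by (simp only: set_integral_add(2)[OF set_integrable_mult_right[OF i1] set_integrable_mult_right[OF i2]] set_integral_mult_right)
  also have "\<dots> = C1 * (EE lam x - 1) + (- \<i> * C2) * KK v lam x"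
  proof -
    have "(LINT t:{0..x}|lborel. - \<i> * of_real lam * EE lam t) = - \<i> * of_real lam * (LINT t:{0..x}|lborel. EE lam t)"
      by (rule set_integral_mult_right)
    also have "\<dots> = EE lam x - 1" using EE_int_FTC[of 0 x] x by simp
    finally show ?thesis using K_ident[OF x] by simp
  qed
  finally show ?thesis by (simp add: PHI_def algebra_simps)
qed

lemma phi_L2: "L2_01 (\<lambda>t. - \<i> * of_real lam * PHI v lam C1 C2 t - \<i> * C2 * v t)"
proof -
  have "L2_01 (\<lambda>t. (- \<i> * of_real lam) * PHI v lam C1 C2 t + (- \<i> * C2) * v t)"
    by (intro L2_add L2_cmult L2_cont phi_cont hv)
  moreover have "(\<lambda>t. (- \<i> * of_real lam) * PHI v lam C1 C2 t + (- \<i> * C2) * v t) = (\<lambda>t. - \<i> * of_real lam * PHI v lam C1 C2 t - \<i> * C2 * v t)"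
    by (rule ext) (simp add: algebra_simps)
  ultimately show ?thesis by simp
qed

lemma phi_ip: "ip01 (PHI v lam C1 C2) v = C1 * cnj (vtilde v lam) - \<i> * C2 * vhat v lam"
proof -
  have hc: "L2_01 (\<lambda>x. cnj (v x))" by (rule L2_cnj[OF hv])
  have i1: "set_integrable lborel {0..1} (\<lambda>x. EE lam x * cnj (v x))"
    by (rule L2_mult_bdd[OF hc, of _ _ 1]) (auto simp: set_borel_measurable_def)
  obtain B where B: "\<forall>x\<in>{0..1}. norm (KK v lam x) \<le> B" using K_bdd by blast
  have i2: "set_integrable lborel {0..1} (\<lambda>x. KK v lam x * cnj (v x))"
    by (rule L2_mult_bdd[OF hc _ _ K_meas, of B]) (use B in auto)
  have "ip01 (PHI v lam C1 C2) v = (LINT x:{0..1}|lborel. C1 * (EE lam x * cnj (v x)) + (- \<i> * C2) * (KK v lam x * cnj (v x)))"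
    unfolding ip01_def by (rule set_lebesgue_integral_cong) (auto simp: PHI_def algebra_simps)
  also have "\<dots> = C1 * (LINT x:{0..1}|lborel. EE lam x * cnj (v x)) + (- \<i> * C2) * (LINT x:{0..1}|lborel. KK v lam x * cnj (v x))"
    by (simp only: set_integral_add(2)[OF set_integrable_mult_right[OF i1] set_integrable_mult_right[OF i2]] set_integral_mult_right)
  also have "(LINT x:{0..1}|lborel. EE lam x * cnj (v x)) = cnj (vtilde v lam)"
    unfolding vtilde_def cnj_set_integral by (rule set_lebesgue_integral_cong) (auto simp: EE_def exp_cnj)
  also have "(LINT x:{0..1}|lborel. KK v lam x * cnj (v x)) = vhat v lam"
    unfolding vhat_def KK_def EE_def ..
  finally show ?thesis by simp
qed

lemma phi_1: "PHI v lam C1 C2 1 = C1 * EE lam 1 - \<i> * C2 * (EE lam 1 * vtilde v lam)"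
  unfolding PHI_def KW W_1 ..

end


lemma alg1:
  fixes C1 C2 eps ea cv vt vh :: complex
  shows "(C1 * eps - \<i> * C2 * (eps * vt)) - ea * (C1 - \<i> * (C1 * cv - \<i> * C2 * vh))
    = C1 * (eps - ea + \<i> * ea * cv) - \<i> * C2 * (eps * vt + \<i> * ea * vh)"
  by (simp add: algebra_simps)

lemma alg2:
  fixes C1 C2 cv vh :: complex
  shows "2 * (C2 + (C1 - \<i> / 2 * (C1 * cv - \<i> * C2 * vh))) = - \<i> * (C1 * (2 * \<i> + cv) + \<i> * C2 * (2 - vh))"
  by (simp add: algebra_simps)

lemma EE_1: "EE lam 1 = exp (- \<i> * complex_of_real lam)"
  by (simp add: EE_def)

lemma seti_meas: "set_integrable M A f \<Longrightarrow> set_borel_measurable M A f"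
  unfolding set_integrable_def set_borel_measurable_def by (rule borel_measurable_integrable)


lemma part2:
  fixes v :: "real \<Rightarrow> complex" and \<alpha> lam :: real and C1 C2 :: complex
  assumes hv: "L2_01 v" and nz: "(C1, C2) \<noteq> (0, 0)"
    and e1: "C1 * (exp (- \<i> * complex_of_real lam) - exp (\<i> * complex_of_real \<alpha>)
               + \<i> * exp (\<i> * complex_of_real \<alpha>) * cnj (vtilde v lam))
         - \<i> * C2 * (exp (- \<i> * complex_of_real lam) * vtilde v lam
               + \<i> * exp (\<i> * complex_of_real \<alpha>) * vhat v lam) = 0"
    and e2: "C1 * (2 * \<i> + cnj (vtilde v lam)) + \<i> * C2 * (2 - vhat v lam) = 0"
  shows "eigenfunA v \<alpha> lam (PHI v lam C1 C2)"
proof -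
  let ?p = "PHI v lam C1 C2"
  define g where "g t = - \<i> * of_real lam * ?p t - \<i> * C2 * v t" for t
  have W: "W21_deriv ?p g"
    unfolding W21_deriv_def g_def using phi_L2[OF hv] phi_ident[OF hv] by blast
  have ip: "ip01 ?p v = C1 * cnj (vtilde v lam) - \<i> * C2 * vhat v lam"
    by (rule phi_ip[OF hv])
  have bc: "?p 1 = exp (\<i> * complex_of_real \<alpha>) * (?p 0 - \<i> * ip01 ?p v)"
  proof -
    have "?p 1 - exp (\<i> * complex_of_real \<alpha>) * (?p 0 - \<i> * ip01 ?p v) = 0"
      unfolding phi_1[OF hv] phi_0[OF hv] ip EE_1 alg1 using e1 by simp
    then show ?thesis by simp
  qed
  have key: "?p 0 - \<i> / 2 * ip01 ?p v = - C2"
  proof -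
    have "2 * (C2 + (?p 0 - \<i> / 2 * ip01 ?p v)) = 0"
      unfolding phi_0[OF hv] ip alg2 using e2 by simp
    then show ?thesis by (simp add: algebra_simps)
  qed
  have nAE: "\<not> (AE x in lborel. x \<in> {0..1} \<longrightarrow> ?p x = 0)"
  proof
    assume ae: "AE x in lborel. x \<in> {0..1} \<longrightarrow> ?p x = 0"
    have z: "?p x = 0" if "x \<in> {0..1}" for x
      by (rule cont_ae_zero[OF phi_cont[OF hv] ae that])
    have c1: "C1 = 0" using z[of 0] phi_0[OF hv] by simp
    with nz have c2: "C2 \<noteq> 0" by simp
    have kz: "KK v lam x = 0" if "x \<in> {0..1}" for x
      using z[OF that] c1 c2 unfolding PHI_def by simp
    have "vhat v lam = (LINT x:{0..1}|lborel. KK v lam x * cnj (v x))"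
      unfolding vhat_def KK_def EE_def ..
    also have "\<dots> = (LINT x:{0..1}|lborel. (0::complex))"
      using set_lebesgue_integral_cong[of "{0..1}" lborel "\<lambda>x. KK v lam x * cnj (v x)" "\<lambda>x. 0"] kz by auto
    finally have "vhat v lam = 0" by simp
    with e2 c1 c2 show False by simp
  qed
  have eq: "AE x in lborel. x \<in> {0..1} \<longrightarrow>
      \<i> * g x + v x * (?p 0 - (\<i> / 2) * ip01 ?p v) = complex_of_real lam * ?p x"
    by (intro AE_I2) (simp only: key, simp add: g_def algebra_simps)
  show ?thesis
    unfolding eigenfunA_def domA_def W21_def using W bc nAE eq by blast
qed


lemma part1:
  fixes v \<psi> :: "real \<Rightarrow> complex" and \<alpha> lam :: real
  assumes hv: "L2_01 v" and ef: "eigenfunA v \<alpha> lam \<psi>"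
  shows "chi v \<alpha> lam = 0"
proof -
  note ef' = ef[unfolded eigenfunA_def]
  have dom: "domA v \<alpha> \<psi>" using ef' by (rule conjunct1)
  have nAE: "\<not> (AE x in lborel. x \<in> {0..1} \<longrightarrow> \<psi> x = 0)" by (rule conjunct1[OF conjunct2[OF ef']])
  obtain g where W: "W21_deriv \<psi> g"
    and ae: "AE x in lborel. x \<in> {0..1} \<longrightarrow>
           \<i> * g x + v x * (\<psi> 0 - (\<i> / 2) * ip01 \<psi> v) = complex_of_real lam * \<psi> x"
    using conjunct2[OF conjunct2[OF ef']] by (elim exE conjE)
  define c where "c = \<psi> 0 - (\<i> / 2) * ip01 \<psi> v"
  define C1 where "C1 = \<psi> 0"
  define C2 where "C2 = - c"
  let ?p = "PHI v lam C1 C2"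
  have gL2: "L2_01 g" and rep: "\<And>x. x \<in> {0..1} \<Longrightarrow> \<psi> x = \<psi> 0 + (LINT t:{0..x}|lborel. g t)"
    using W unfolding W21_deriv_def by blast+
  have gi: "set_integrable lborel {0..1} g" by (rule L2_integrable[OF gL2])
  have gix: "set_integrable lborel {0..x} g" if "x \<in> {0..1}" for x
    by (rule set_integrable_subset[OF gi]) (use that in auto)
  have psi_cont: "continuous_on {0..1} \<psi>"
  proof (rule continuous_on_eq)
    show "continuous_on {0..1} (\<lambda>x. \<psi> 0 + (LINT t:{0..x}|lborel. g t))"
      by (intro continuous_intros indef_cont gi)
    show "\<psi> 0 + (LINT t:{0..x}|lborel. g t) = \<psi> x" if "x \<in> {0..1}" for x
      using rep[OF that] by simp
  qed
  have psi_int: "set_integrable lborel {0..x} \<psi>" if "x \<le> 1" for x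
    by (rule borel_integrable_atLeastAtMost', rule continuous_on_subset[OF psi_cont]) (use that in auto)
  have hint: "set_integrable lborel {0..x} (\<lambda>t. - \<i> * of_real lam * \<psi> t - \<i> * C2 * v t)" if "x \<in> {0..1}" for x
    by (rule set_integral_diff(1)[OF set_integrable_mult_right[OF psi_int] set_integrable_mult_right[OF seti_v[OF hv]]])
       (use that in auto)
  have pint: "set_integrable lborel {0..x} (\<lambda>t. - \<i> * of_real lam * ?p t - \<i> * C2 * v t)" if "x \<in> {0..1}" for x
    by (rule set_integral_diff(1)[OF set_integrable_mult_right[OF phi_int[OF hv]] set_integrable_mult_right[OF seti_v[OF hv]]])
       (use that in auto)
  have gpt: "g x = - \<i> * of_real lam * \<psi> x - \<i> * C2 * v x"
    if "\<i> * g x + v x * c = complex_of_real lam * \<psi> x" for x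
  proof -
    have h: "\<i> * g x = complex_of_real lam * \<psi> x - v x * c" using that by (simp add: algebra_simps)
    have "g x = - \<i> * (\<i> * g x)" by simp
    also have "\<dots> = - \<i> * (complex_of_real lam * \<psi> x - v x * c)" by (simp only: h)
    also have "\<dots> = - \<i> * of_real lam * \<psi> x - \<i> * C2 * v x" by (simp add: C2_def algebra_simps)
    finally show ?thesis .
  qed
  have gae: "(LINT t:{0..x}|lborel. g t) = (LINT t:{0..x}|lborel. - \<i> * of_real lam * \<psi> t - \<i> * C2 * v t)"
    if x: "x \<in> {0..1}" for x
  proof (rule set_integral_cong_AE'[OF seti_meas[OF gix[OF x]] seti_meas[OF hint[OF x]]])
    show "AE t in lborel. t \<in> {0..x} \<longrightarrow> g t = - \<i> * of_real lam * \<psi> t - \<i> * C2 * v t"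
      using ae
    proof eventually_elim
      case (elim t)
      show ?case
      proof
        assume "t \<in> {0..x}"
        then have "t \<in> {0..1}" using x by auto
        then show "g t = - \<i> * of_real lam * \<psi> t - \<i> * C2 * v t"
          using elim by (intro gpt) (simp add: c_def)
      qed
    qed
  qed
  have d_eq: "\<psi> x - ?p x = (- \<i> * of_real lam) * integral {0..x} (\<lambda>t. \<psi> t - ?p t)" if x: "x \<in> {0..1}" for x
  proof -
    have "\<psi> x - ?p x = (LINT t:{0..x}|lborel. - \<i> * of_real lam * \<psi> t - \<i> * C2 * v t)
         - (LINT t:{0..x}|lborel. - \<i> * of_real lam * ?p t - \<i> * C2 * v t)"
      using rep[OF x] gae[OF x] phi_ident[OF hv x, of lam C1 C2] phi_0[OF hv] by (simp add: C1_def)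
    also have "\<dots> = (LINT t:{0..x}|lborel. (- \<i> * of_real lam * \<psi> t - \<i> * C2 * v t) - (- \<i> * of_real lam * ?p t - \<i> * C2 * v t))"
      by (rule set_integral_diff(2)[symmetric, OF hint[OF x] pint[OF x]])
    also have "\<dots> = (LINT t:{0..x}|lborel. (- \<i> * of_real lam) * (\<psi> t - ?p t))"
      by (rule set_lebesgue_integral_cong) (auto simp: algebra_simps)
    also have "\<dots> = (- \<i> * of_real lam) * (LINT t:{0..x}|lborel. \<psi> t - ?p t)"
      by (rule set_integral_mult_right)
    also have "(LINT t:{0..x}|lborel. \<psi> t - ?p t) = integral {0..x} (\<lambda>t. \<psi> t - ?p t)"
      by (rule lint_integral, rule set_integral_diff(1)[OF psi_int phi_int[OF hv]]) (use x in auto)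
    finally show ?thesis .
  qed
  have eqp: "\<psi> x = ?p x" if x: "x \<in> {0..1}" for x
  proof -
    have "(\<lambda>t. \<psi> t - ?p t) x = 0"
      by (rule ode_uniq[OF _ d_eq x]) (intro continuous_intros psi_cont phi_cont[OF hv])
    then show ?thesis by simp
  qed
  have nz: "(C1, C2) \<noteq> (0, 0)"
  proof
    assume "(C1, C2) = (0, 0)"
    then have "\<psi> x = 0" if "x \<in> {0..1}" for x
      using eqp[OF that] by (simp add: PHI_def)
    then have "AE x in lborel. x \<in> {0..1} \<longrightarrow> \<psi> x = 0" by (intro AE_I2) auto
    with nAE show False by simp
  qed
  have ipeq: "ip01 \<psi> v = C1 * cnj (vtilde v lam) - \<i> * C2 * vhat v lam"
  proof -
    have "ip01 \<psi> v = ip01 ?p v"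
      unfolding ip01_def by (rule set_lebesgue_integral_cong) (auto simp: eqp)
    then show ?thesis using phi_ip[OF hv] by simp
  qed
  have bc: "\<psi> 1 = exp (\<i> * complex_of_real \<alpha>) * (\<psi> 0 - \<i> * ip01 \<psi> v)"
    using dom unfolding domA_def by blast
  have p1: "\<psi> 1 = C1 * exp (- \<i> * complex_of_real lam) - \<i> * C2 * (exp (- \<i> * complex_of_real lam) * vtilde v lam)"
    using eqp[of 1] phi_1[OF hv, of lam C1 C2] by (simp add: EE_1)
  have e1: "C1 * (exp (- \<i> * complex_of_real lam) - exp (\<i> * complex_of_real \<alpha>)
               + \<i> * exp (\<i> * complex_of_real \<alpha>) * cnj (vtilde v lam))
         - \<i> * C2 * (exp (- \<i> * complex_of_real lam) * vtilde v lam
               + \<i> * exp (\<i> * complex_of_real \<alpha>) * vhat v lam) = 0"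
    unfolding alg1[symmetric] using bc p1 ipeq by (simp add: C1_def)
  have e2: "C1 * (2 * \<i> + cnj (vtilde v lam)) + \<i> * C2 * (2 - vhat v lam) = 0"
  proof -
    have "2 * (C2 + (C1 - \<i> / 2 * (C1 * cnj (vtilde v lam) - \<i> * C2 * vhat v lam))) = 0"
      unfolding ipeq[symmetric] by (simp add: C2_def c_def C1_def)
    then show ?thesis unfolding alg2 by simp
  qed
  show ?thesis unfolding chi_def using det_zero[OF e1 e2 nz] .
qed


theorem theorem6p1:
  fixes v :: "real \<Rightarrow> complex" and \<alpha> :: real
  assumes hv: "L2_01 v"
    and h\<alpha>: "0 \<le> \<alpha>" "\<alpha> < 2 * pi"
  shows "(\<forall>lam::real. eigenvalueA v \<alpha> lam \<longleftrightarrow> chi v \<alpha> lam = 0)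
    \<and> (\<forall>(lam::real) (C1::complex) (C2::complex). chi v \<alpha> lam = 0 \<longrightarrow> (C1, C2) \<noteq> (0, 0) \<longrightarrow>
         C1 * (exp (- \<i> * complex_of_real lam) - exp (\<i> * complex_of_real \<alpha>)
               + \<i> * exp (\<i> * complex_of_real \<alpha>) * cnj (vtilde v lam))
         - \<i> * C2 * (exp (- \<i> * complex_of_real lam) * vtilde v lam
               + \<i> * exp (\<i> * complex_of_real \<alpha>) * vhat v lam) = 0 \<longrightarrow>
         C1 * (2 * \<i> + cnj (vtilde v lam)) + \<i> * C2 * (2 - vhat v lam) = 0 \<longrightarrow>
         eigenfunA v \<alpha> lam (\<lambda>x. C1 * exp (- \<i> * complex_of_real (lam * x))
             - \<i> * C2 * (LINT y:{0..x}|lborel. exp (- \<i> * complex_of_real (lam * (x - y))) * v y)))"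
proof -
  have psi: "(\<lambda>x. C1 * exp (- \<i> * complex_of_real (lam * x))
             - \<i> * C2 * (LINT y:{0..x}|lborel. exp (- \<i> * complex_of_real (lam * (x - y))) * v y))
        = PHI v lam C1 C2" for lam C1 C2
    by (rule ext) (simp only: PHI_def EE_def KK_def)
  have A: "eigenvalueA v \<alpha> lam \<longleftrightarrow> chi v \<alpha> lam = 0" for lam
  proof
    assume "eigenvalueA v \<alpha> lam"
    then obtain \<psi> where "eigenfunA v \<alpha> lam \<psi>" unfolding eigenvalueA_def by blast
    then show "chi v \<alpha> lam = 0" by (rule part1[OF hv])
  next
    assume "chi v \<alpha> lam = 0"
    then obtain C1 C2 where nz: "(C1, C2) \<noteq> (0, 0)"
      and e1: "C1 * (exp (- \<i> * complex_of_real lam) - exp (\<i> * complex_of_real \<alpha>)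
               + \<i> * exp (\<i> * complex_of_real \<alpha>) * cnj (vtilde v lam))
         - \<i> * C2 * (exp (- \<i> * complex_of_real lam) * vtilde v lam
               + \<i> * exp (\<i> * complex_of_real \<alpha>) * vhat v lam) = 0"
      and e2: "C1 * (2 * \<i> + cnj (vtilde v lam)) + \<i> * C2 * (2 - vhat v lam) = 0"
      using det_sol unfolding chi_def by blast
    show "eigenvalueA v \<alpha> lam"
      unfolding eigenvalueA_def using part2[OF hv nz e1 e2] by blast
  qed
  show ?thesis
    using A part2[OF hv] unfolding psi by blast
qed

end
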